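(* Let $(A,S,P,C_w,C_l)$ be a common knowledge distinguishing debate game. Let $m,n$ be positive integers and $\varepsilon\in[0,1]$ be such that, if $s$ is sampled according to $P$, the probability that $|C_w(s)|<m$ or $|C_l(s)|>n$ is at most $\varepsilon$. Suppose $m>n$ and set $r=m/n$. Let $\alpha\in(0,1]$ and $k,l$ be positive integers. Let $(\mu_i)_{i=1}^k$ be a non-increasing sequence in $(0,1]$, and $(\nu_j)_{j=1}^l$ a non-decreasing sequence in $[\alpha/\log_2(r),\infty)$. Define the following quantities: - $\theta_{i,j}=e^{-\mu_i\alpha r^{1-\nu_j}}$ for $1\le i\le k$, $1\le j\le l$; - $\zeta_i=e^{-\alpha r}\left(\frac{e}{\mu_i}\right)^{\mu_i\alpha r}$ for $1\le i\le k$, and $\zeta_0=1$; - $\xi_j=e^{-\alpha}r^{-\nu_j\log_2\left(\frac{\nu_j\log_2(r)}{e\alpha}\right)}$ for $1\le j\le l$, and $\xi_0=1$. Then there exists a policy with error at most $\sum_{i=1}^k\sum_{j=1}^l\theta_{i,j}\zeta_{i-1}\xi_{j-1}+\zeta_k+\xi_l+\varepsilon$.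
   Context: Let $\delta$ be a special default action. A CKDDG is a tuple $(A,S,P,C_w,C_l)$ with $A$ a finite set, $\delta\notin A$, $S$ a finite set of scenarios, $P$ a probability mass function on $S$, and $C_w,C_l:S\to\mathcal P(A)$. $C_w(s)$ and $C_l(s)$ are the actions available to the desired winner and the desired loser in scenario $s$. A policy is a map $M:\{1,2\}\times(A\cup\{\delta\})^2\to[0,1]$ with $M(1,a_1,a_2)+M(2,a_1,a_2)=1$ for all $a_1,a_2$. For a policy $M$ and $j\in\{1,2\}$, $s\in S$, let $w^i_M((j,s))$ be the value to agent $i$ of the two-player zero-sum game with payoff matrix $M(i,\cdot,\cdot)$ in which agent $j$ (the desired winner) chooses from $C_w(s)\cup\{\delta\}$ and the other agent chooses from $C_l(s)\cup\{\delta\}$. The error of $M$ is $\mathbb E_{s\sim P}\left[\frac{w^1_M((2,s))+w^2_M((1,s))}{2}\right]$, i.e. the probability that the desired loser wins when the roles are assigned uniformly at random. *)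

theory Defs
  imports Complex_Main
begin

text \<open>Actions are elements of type 'a; the default action delta is None,
  an ordinary action a is Some a (so delta is automatically not in A).
  Agents are numbered 1 and 2.\<close>

definition ckddg :: "'a set \<Rightarrow> 's set \<Rightarrow> ('s \<Rightarrow> real) \<Rightarrow> ('s \<Rightarrow> 'a set) \<Rightarrow> ('s \<Rightarrow> 'a set) \<Rightarrow> bool" where
  "ckddg A S P Cw Cl \<longleftrightarrow> finite A \<and> finite S \<and> (\<forall>s\<in>S. P s \<ge> 0) \<and> sum P S = 1
     \<and> (\<forall>s\<in>S. Cw s \<subseteq> A \<and> Cl s \<subseteq> A)"

text \<open>Policy: M i a1 a2 is the probability that agent i is declared winner.\<close>
definition is_policy :: "'a set \<Rightarrow> (nat \<Rightarrow> 'a option \<Rightarrow> 'a option \<Rightarrow> real) \<Rightarrow> bool" where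
  "is_policy A M \<longleftrightarrow> (\<forall>a1\<in>insert None (Some ` A). \<forall>a2\<in>insert None (Some ` A).
      M 1 a1 a2 \<in> {0..1} \<and> M 2 a1 a2 \<in> {0..1} \<and> M 1 a1 a2 + M 2 a1 a2 = 1)"

definition mixed :: "'b set \<Rightarrow> ('b \<Rightarrow> real) set" where
  "mixed X = {p. (\<forall>x. p x \<ge> 0) \<and> (\<forall>x. x \<notin> X \<longrightarrow> p x = 0) \<and> sum p X = 1}"

text \<open>w^i_M((j,s)): value to agent i of the zero-sum game with payoff M i,
  where agent j (desired winner) plays from Cw s + delta and the other agent from Cl s + delta.\<close>
definition game_value :: "(nat \<Rightarrow> 'a option \<Rightarrow> 'a option \<Rightarrow> real) \<Rightarrow> ('s \<Rightarrow> 'a set) \<Rightarrow> ('s \<Rightarrow> 'a set)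
     \<Rightarrow> nat \<Rightarrow> nat \<Rightarrow> 's \<Rightarrow> real" where
  "game_value M Cw Cl i j s =
     (let W = insert None (Some ` Cw s); L = insert None (Some ` Cl s);
          X1 = (if j = 1 then W else L); X2 = (if j = 1 then L else W);
          pay = (\<lambda>p1 p2. \<Sum>a1\<in>X1. \<Sum>a2\<in>X2. p1 a1 * p2 a2 * M i a1 a2)
      in if i = 1 then (SUP p1\<in>mixed X1. INF p2\<in>mixed X2. pay p1 p2)
         else (SUP p2\<in>mixed X2. INF p1\<in>mixed X1. pay p1 p2))"

definition policy_error :: "'s set \<Rightarrow> ('s \<Rightarrow> real) \<Rightarrow> ('s \<Rightarrow> 'a set) \<Rightarrow> ('s \<Rightarrow> 'a set)
     \<Rightarrow> (nat \<Rightarrow> 'a option \<Rightarrow> 'a option \<Rightarrow> real) \<Rightarrow> real" where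
  "policy_error S P Cw Cl M =
     (\<Sum>s\<in>S. P s * ((game_value M Cw Cl 1 2 s + game_value M Cw Cl 2 1 s) / 2))"

definition theta :: "real \<Rightarrow> real \<Rightarrow> (nat \<Rightarrow> real) \<Rightarrow> (nat \<Rightarrow> real) \<Rightarrow> nat \<Rightarrow> nat \<Rightarrow> real" where
  "theta \<alpha> r \<mu> \<nu> i j = exp (- (\<mu> i * \<alpha> * r powr (1 - \<nu> j)))"

definition zeta :: "real \<Rightarrow> real \<Rightarrow> (nat \<Rightarrow> real) \<Rightarrow> nat \<Rightarrow> real" where
  "zeta \<alpha> r \<mu> i = (if i = 0 then 1
      else exp (- (\<alpha> * r)) * (exp 1 / \<mu> i) powr (\<mu> i * \<alpha> * r))"

definition xi :: "real \<Rightarrow> real \<Rightarrow> (nat \<Rightarrow> real) \<Rightarrow> nat \<Rightarrow> real" where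
  "xi \<alpha> r \<nu> j = (if j = 0 then 1
      else exp (- \<alpha>) * r powr (- (\<nu> j * log 2 (\<nu> j * log 2 r / (exp 1 * \<alpha>)))))"

end

theory Submission
  imports Defs "HOL-Library.FuncSet"
begin


definition Om :: "'a set \<Rightarrow> ('a \<Rightarrow> bool) set" where
  "Om A = PiE A (\<lambda>_. UNIV)"

definition wt :: "real \<Rightarrow> 'a set \<Rightarrow> ('a \<Rightarrow> bool) \<Rightarrow> real" where
  "wt p A \<sigma> = (\<Prod>x\<in>A. if \<sigma> x then p else 1 - p)"

definition E1 :: "real \<Rightarrow> 'a set \<Rightarrow> (('a \<Rightarrow> bool) \<Rightarrow> real) \<Rightarrow> real" where
  "E1 p A f = (\<Sum>\<sigma>\<in>Om A. wt p A \<sigma> * f \<sigma>)"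

lemma finite_Om: "finite A \<Longrightarrow> finite (Om A)"
  unfolding Om_def by (intro finite_PiE) auto

lemma E_prod:
  fixes h :: "'a \<Rightarrow> bool \<Rightarrow> real"
  assumes "finite A"
  shows "(\<Sum>\<sigma>\<in>Om A. \<Prod>x\<in>A. h x (\<sigma> x)) = (\<Prod>x\<in>A. h x True + h x False)"
proof -
  have "(\<Prod>x\<in>A. \<Sum>y\<in>(UNIV::bool set). h x y) = (\<Sum>g\<in>PiE A (\<lambda>_. UNIV). \<Prod>x\<in>A. h x (g x))"
    using prod_sum_PiE[of A "\<lambda>_. UNIV" h] assms by simp
  moreover have "\<And>x. (\<Sum>y\<in>(UNIV::bool set). h x y) = h x True + h x False"
    by (simp add: UNIV_bool add.commute)
  ultimately show ?thesis unfolding Om_def by simp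
qed

lemma prod_if_pow:
  assumes "finite A"
  shows "(\<Prod>x\<in>A. if P x then (c::real) else 1) = c ^ card {x\<in>A. P x}"
  using prod.inter_filter[OF assms, of "\<lambda>_. c" P] by simp

lemma wt_nonneg: "0 \<le> p \<Longrightarrow> p \<le> 1 \<Longrightarrow> 0 \<le> wt p A \<sigma>"
  unfolding wt_def by (intro prod_nonneg) auto

lemma E1_one: "finite A \<Longrightarrow> E1 p A (\<lambda>_. 1) = 1"
  unfolding E1_def wt_def using E_prod[of A "\<lambda>x b. if b then p else 1 - p"] by simp

lemma E1_pow:
  assumes "finite A" "W \<subseteq> A"
  shows "E1 p A (\<lambda>\<sigma>. c ^ card {x\<in>W. \<sigma> x}) = (1 - p + p * c) ^ card W"
proof -
  have "E1 p A (\<lambda>\<sigma>. c ^ card {x\<in>W. \<sigma> x}) =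
     (\<Sum>\<sigma>\<in>Om A. \<Prod>x\<in>A. (if \<sigma> x then p else 1 - p) * (if x \<in> W \<and> \<sigma> x then c else 1))"
  proof (unfold E1_def, intro sum.cong refl)
    fix \<sigma> assume "\<sigma> \<in> Om A"
    have "{x\<in>A. x \<in> W \<and> \<sigma> x} = {x\<in>W. \<sigma> x}" using assms by auto
    then have "c ^ card {x\<in>W. \<sigma> x} = (\<Prod>x\<in>A. if x \<in> W \<and> \<sigma> x then c else 1)"
      using prod_if_pow[OF assms(1), of "\<lambda>x. x \<in> W \<and> \<sigma> x" c] by simp
    then show "wt p A \<sigma> * c ^ card {x\<in>W. \<sigma> x} = (\<Prod>x\<in>A. (if \<sigma> x then p else 1 - p) * (if x \<in> W \<and> \<sigma> x then c else 1))"
      unfolding wt_def by (simp add: prod.distrib)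
  qed
  also have "\<dots> = (\<Prod>x\<in>A. if x \<in> W then 1 - p + p * c else 1)"
    by (subst E_prod[OF assms(1)]) (intro prod.cong, auto)
  also have "\<dots> = (1 - p + p * c) ^ card W"
  proof -
    have "{x\<in>A. x \<in> W} = W" using assms by auto
    then show ?thesis using prod_if_pow[OF assms(1), of "\<lambda>x. x \<in> W"] by simp
  qed
  finally show ?thesis .
qed

lemma E1_mono:
  assumes "0 \<le> p" "p \<le> 1" "\<And>\<sigma>. \<sigma> \<in> Om A \<Longrightarrow> f \<sigma> \<le> g \<sigma>"
  shows "E1 p A f \<le> E1 p A g"
  unfolding E1_def by (intro sum_mono mult_left_mono assms wt_nonneg)

lemma E1_cmult: "E1 p A (\<lambda>\<sigma>. f \<sigma> * c) = E1 p A f * c"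
  unfolding E1_def by (simp add: sum_distrib_right mult.assoc)

lemma chernoff_upper:
  fixes p \<alpha> t :: real
  assumes A: "finite A" "L \<subseteq> A" and p: "0 \<le> p" "p \<le> 1" "p * card L \<le> \<alpha>"
    and al: "0 < \<alpha>" "\<alpha> \<le> t"
  shows "E1 p A (\<lambda>\<sigma>. if t \<le> real (card {x\<in>L. \<sigma> x}) then 1 else 0)
     \<le> exp (- \<alpha>) * (exp 1 * \<alpha> / t) powr t"
proof -
  define q where "q = t / \<alpha>"
  have q1: "1 \<le> q" using al by (simp add: q_def)
  have tpos: "0 < t" using al by simp
  have "E1 p A (\<lambda>\<sigma>. if t \<le> real (card {x\<in>L. \<sigma> x}) then 1 else 0)
       \<le> E1 p A (\<lambda>\<sigma>. q ^ card {x\<in>L. \<sigma> x} * (1 / q powr t))"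
  proof (rule E1_mono[OF p(1,2)])
    fix \<sigma> :: "'a \<Rightarrow> bool"
    let ?X = "card {x\<in>L. \<sigma> x}"
    have "0 < q powr t" using q1 by simp
    show "(if t \<le> real ?X then 1 else 0) \<le> q ^ ?X * (1 / q powr t)"
    proof (cases "t \<le> real ?X")
      case True
      have "q powr t \<le> q powr real ?X" by (rule powr_mono[OF True q1])
      also have "\<dots> = q ^ ?X" using q1 by (simp add: powr_realpow)
      finally show ?thesis using \<open>0 < q powr t\<close> True by simp
    next
      case False
      then show ?thesis using q1 by simp
    qed
  qed
  also have "\<dots> = (1 - p + p * q) ^ card L * (1 / q powr t)"
    by (subst E1_cmult) (simp only: E1_pow[OF A])
  also have "\<dots> \<le> exp (\<alpha> * (q - 1)) * (1 / q powr t)"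
  proof (rule mult_right_mono)
    have "(1 - p + p * q) ^ card L \<le> exp (p * (q - 1)) ^ card L"
    proof (intro power_mono)
      have "0 \<le> p * q" using p q1 by simp
      then show "0 \<le> 1 - p + p * q" using p by linarith
      show "1 - p + p * q \<le> exp (p * (q - 1))"
        using exp_ge_add_one_self[of "p * (q - 1)"] by (simp add: algebra_simps)
    qed
    also have "\<dots> = exp (card L * (p * (q - 1)))" by (simp add: exp_of_nat_mult)
    also have "\<dots> \<le> exp (\<alpha> * (q - 1))"
      using mult_right_mono[OF p(3), of "q - 1"] q1 by (simp add: mult.assoc mult.commute mult.left_commute)
    finally show "(1 - p + p * q) ^ card L \<le> exp (\<alpha> * (q - 1))" .
  qed (use q1 in simp)
  also have "\<dots> = exp (- \<alpha>) * (exp 1 * \<alpha> / t) powr t"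
  proof -
    have e: "\<alpha> * (q - 1) = t - \<alpha>" using al by (simp add: q_def field_simps)
    have X: "(exp 1 * \<alpha> / t) powr t = exp t * (\<alpha> powr t / t powr t)"
    proof -
      have "ln (exp 1 * \<alpha> / t) = 1 + ln \<alpha> - ln t" using al by (simp add: ln_div ln_mult)
      then show ?thesis using al
        by (simp add: powr_def right_diff_distrib distrib_left exp_diff exp_add)
    qed
    have Q: "q powr t = t powr t / \<alpha> powr t" using al by (simp add: q_def powr_divide)
    show ?thesis unfolding X Q e exp_diff using al by (simp add: exp_minus field_simps)
  qed
  finally show ?thesis .
qed

lemma chernoff_lower:
  fixes p \<mu> c :: real
  assumes A: "finite A" "W \<subseteq> A" and p: "0 \<le> p" "p \<le> 1" "c \<le> p * card W"
    and mu: "0 < \<mu>" "\<mu> \<le> 1" and c: "0 \<le> c"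
  shows "E1 p A (\<lambda>\<sigma>. if real (card {x\<in>W. \<sigma> x}) \<le> \<mu> * c then 1 else 0)
     \<le> exp (- c) * (exp 1 / \<mu>) powr (\<mu> * c)"
proof -
  have "E1 p A (\<lambda>\<sigma>. if real (card {x\<in>W. \<sigma> x}) \<le> \<mu> * c then 1 else 0)
       \<le> E1 p A (\<lambda>\<sigma>. \<mu> ^ card {x\<in>W. \<sigma> x} * (1 / \<mu> powr (\<mu> * c)))"
  proof (rule E1_mono[OF p(1,2)])
    fix \<sigma> :: "'a \<Rightarrow> bool"
    let ?X = "card {x\<in>W. \<sigma> x}"
    have "0 < \<mu> powr (\<mu> * c)" using mu by simp
    show "(if real ?X \<le> \<mu> * c then 1 else 0) \<le> \<mu> ^ ?X * (1 / \<mu> powr (\<mu> * c))"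
    proof (cases "real ?X \<le> \<mu> * c")
      case True
      have "\<mu> powr (\<mu> * c) \<le> \<mu> powr real ?X" by (rule powr_mono'[OF True]) (use mu in auto)
      also have "\<dots> = \<mu> ^ ?X" using mu by (simp add: powr_realpow)
      finally show ?thesis using \<open>0 < \<mu> powr (\<mu> * c)\<close> True by simp
    next
      case False
      then show ?thesis using mu by simp
    qed
  qed
  also have "\<dots> = (1 - p + p * \<mu>) ^ card W * (1 / \<mu> powr (\<mu> * c))"
    by (subst E1_cmult) (simp only: E1_pow[OF A])
  also have "\<dots> \<le> exp (- (c * (1 - \<mu>))) * (1 / \<mu> powr (\<mu> * c))"
  proof (rule mult_right_mono)
    have "(1 - p + p * \<mu>) ^ card W \<le> exp (- (p * (1 - \<mu>))) ^ card W"
    proof (intro power_mono)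
      have "0 \<le> p * \<mu>" using p mu by simp
      then show "0 \<le> 1 - p + p * \<mu>" using p by linarith
      show "1 - p + p * \<mu> \<le> exp (- (p * (1 - \<mu>)))"
        using exp_ge_add_one_self[of "- (p * (1 - \<mu>))"] by (simp add: algebra_simps)
    qed
    also have "\<dots> = exp (- (card W * (p * (1 - \<mu>))))" by (simp add: exp_of_nat_mult[symmetric])
    also have "\<dots> \<le> exp (- (c * (1 - \<mu>)))"
      using mult_right_mono[OF p(3), of "1 - \<mu>"] mu by (simp add: mult.assoc mult.commute mult.left_commute)
    finally show "(1 - p + p * \<mu>) ^ card W \<le> exp (- (c * (1 - \<mu>)))" .
  qed (use mu in simp)
  also have "\<dots> = exp (- c) * (exp 1 / \<mu>) powr (\<mu> * c)"
  proof -
    have "(exp 1 / \<mu>) powr (\<mu> * c) = exp (\<mu> * c) / \<mu> powr (\<mu> * c)"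
    proof -
      have "ln (exp 1 / \<mu>) = 1 - ln \<mu>" using mu by (simp add: ln_div)
      then show ?thesis using mu
        by (simp add: powr_def right_diff_distrib exp_diff)
    qed
    then show ?thesis by (simp add: exp_diff exp_add[symmetric] field_simps algebra_simps)
  qed
  finally show ?thesis .
qed

lemma layered:
  fixes X Y g :: real and a b :: "nat \<Rightarrow> real" and th :: "nat \<Rightarrow> nat \<Rightarrow> real"
  assumes kl: "0 < k" "0 < l" and th: "\<And>i j. 0 \<le> th i j" and g1: "g \<le> 1"
    and bnd: "\<And>i j. 1 \<le> i \<Longrightarrow> i \<le> k \<Longrightarrow> 1 \<le> j \<Longrightarrow> j \<le> l \<Longrightarrow> a i < Y \<Longrightarrow> X < b j \<Longrightarrow> g \<le> th i j"
  shows "g \<le> (\<Sum>i=1..k. \<Sum>j=1..l. th i j * (if i = 1 \<or> Y \<le> a (i - 1) then 1 else 0)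
                  * (if j = 1 \<or> b (j - 1) \<le> X then 1 else 0))
            + (if Y \<le> a k then 1 else 0) + (if b l \<le> X then 1 else 0)"
proof -
  define T where "T i j = th i j * (if i = 1 \<or> Y \<le> a (i - 1) then 1 else 0)
                  * (if j = 1 \<or> b (j - 1) \<le> X then 1 else 0)" for i j
  have Tn: "0 \<le> T i j" for i j unfolding T_def using th[of i j] by simp
  have S0: "0 \<le> (\<Sum>i=1..k. \<Sum>j=1..l. T i j)" by (intro sum_nonneg) (simp add: Tn)
  show ?thesis
  proof (cases "Y \<le> a k \<or> b l \<le> X")
    case True
    then show ?thesis using S0 g1 unfolding T_def[symmetric] by auto
  next
    case False
    then have Yk: "a k < Y" and Xl: "X < b l" by auto
    define i0 where "i0 = (LEAST i. 1 \<le> i \<and> a i < Y)"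
    have ex1: "1 \<le> k \<and> a k < Y" using kl Yk by simp
    have i0: "1 \<le> i0 \<and> a i0 < Y" unfolding i0_def by (rule LeastI[of "\<lambda>i. 1 \<le> i \<and> a i < Y", OF ex1])
    have i0k: "i0 \<le> k" unfolding i0_def by (rule Least_le[of "\<lambda>i. 1 \<le> i \<and> a i < Y", OF ex1])
    have i0p: "i0 = 1 \<or> Y \<le> a (i0 - 1)"
    proof (rule ccontr)
      assume "\<not> ?thesis"
      then have "1 \<le> i0 - 1 \<and> a (i0 - 1) < Y" "i0 - 1 < i0" using i0 by auto
      then show False using not_less_Least[of "i0 - 1" "\<lambda>i. 1 \<le> i \<and> a i < Y"] unfolding i0_def by blast
    qed
    define j0 where "j0 = (LEAST j. 1 \<le> j \<and> X < b j)"
    have ex2: "1 \<le> l \<and> X < b l" using kl Xl by simp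
    have j0: "1 \<le> j0 \<and> X < b j0" unfolding j0_def by (rule LeastI[of "\<lambda>j. 1 \<le> j \<and> X < b j", OF ex2])
    have j0l: "j0 \<le> l" unfolding j0_def by (rule Least_le[of "\<lambda>j. 1 \<le> j \<and> X < b j", OF ex2])
    have j0p: "j0 = 1 \<or> b (j0 - 1) \<le> X"
    proof (rule ccontr)
      assume "\<not> ?thesis"
      then have "1 \<le> j0 - 1 \<and> X < b (j0 - 1)" "j0 - 1 < j0" using j0 by auto
      then show False using not_less_Least[of "j0 - 1" "\<lambda>j. 1 \<le> j \<and> X < b j"] unfolding j0_def by blast
    qed
    have "g \<le> th i0 j0" using bnd[of i0 j0] i0 i0k j0 j0l by simp
    also have "\<dots> = T i0 j0" unfolding T_def using i0p j0p by auto
    also have "\<dots> \<le> (\<Sum>j=1..l. T i0 j)"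
      by (rule member_le_sum) (use j0 j0l Tn in auto)
    also have "\<dots> \<le> (\<Sum>i=1..k. \<Sum>j=1..l. T i j)"
      by (rule member_le_sum[of i0 "{1..k}" "\<lambda>i. \<Sum>j=1..l. T i j"]) (use i0 i0k Tn in \<open>auto intro: sum_nonneg\<close>)
    finally show ?thesis unfolding T_def[symmetric] by simp
  qed
qed

definition E2 :: "real \<Rightarrow> 'a set \<Rightarrow> (('a \<Rightarrow> bool) \<Rightarrow> ('a \<Rightarrow> bool) \<Rightarrow> real) \<Rightarrow> real" where
  "E2 p A F = (\<Sum>\<sigma>\<in>Om A. \<Sum>\<sigma>'\<in>Om A. wt p A \<sigma> * wt p A \<sigma>' * F \<sigma> \<sigma>')"

lemma E2_add: "E2 p A (\<lambda>x y. F x y + G x y) = E2 p A F + E2 p A G"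
  unfolding E2_def by (simp add: distrib_left sum.distrib)

lemma E2_sum: "E2 p A (\<lambda>x y. \<Sum>i\<in>I. F i x y) = (\<Sum>i\<in>I. E2 p A (F i))"
  unfolding E2_def by (simp add: sum_distrib_left sum.swap[of _ I])

lemma E2_prod: "E2 p A (\<lambda>x y. c * h x * f y) = c * (E1 p A h * E1 p A f)"
  unfolding E2_def E1_def
  by (simp add: sum_product sum_distrib_left mult.assoc mult.commute mult.left_commute)

lemma E2_left: "finite A \<Longrightarrow> E2 p A (\<lambda>x y. h x) = E1 p A h"
  using E2_prod[of p A 1 h "\<lambda>_. 1"] E1_one[of A p] by simp

lemma E2_right: "finite A \<Longrightarrow> E2 p A (\<lambda>x y. f y) = E1 p A f"
  using E2_prod[of p A 1 "\<lambda>_. 1" f] E1_one[of A p] by simp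

lemma E2_mono:
  assumes "0 \<le> p" "p \<le> 1" "\<And>x y. x \<in> Om A \<Longrightarrow> y \<in> Om A \<Longrightarrow> F x y \<le> G x y"
  shows "E2 p A F \<le> E2 p A G"
  unfolding E2_def
  by (intro sum_mono mult_left_mono assms mult_nonneg_nonneg wt_nonneg)

lemma E1_nonneg:
  assumes "0 \<le> p" "p \<le> 1" "\<And>x. 0 \<le> f x"
  shows "0 \<le> E1 p A f"
  unfolding E1_def by (intro sum_nonneg mult_nonneg_nonneg wt_nonneg assms)

lemma xi_eq:
  assumes r: "1 < r" and a: "0 < \<alpha>" and t: "t = v * log 2 r" and at: "\<alpha> \<le> t"
  shows "r powr (- (v * log 2 (v * log 2 r / (exp 1 * \<alpha>)))) = (exp 1 * \<alpha> / t) powr t"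
proof -
  have tpos: "0 < t" using a at by simp
  have lr: "0 < log 2 r" using r by simp
  have vpos: "0 < v" using tpos t lr by (simp add: zero_less_mult_iff)
  have "ln (exp 1 * \<alpha> / t) = - ln (t / (exp 1 * \<alpha>))"
    using a tpos by (simp add: ln_div ln_mult)
  moreover have "- (v * log 2 (t / (exp 1 * \<alpha>))) * ln r = t * (- ln (t / (exp 1 * \<alpha>)))"
    unfolding t log_def by (simp add: field_simps)
  ultimately show ?thesis using r a tpos unfolding t[symmetric]
    by (simp add: powr_def)
qed




lemma E2_prod2: "E2 p A (\<lambda>x y. c * f y * h x) = c * (E1 p A f * E1 p A h)"
  using E2_prod[of p A c h f] by (simp add: mult.commute mult.left_commute)

definition B0 :: "real \<Rightarrow> real \<Rightarrow> (nat \<Rightarrow> real) \<Rightarrow> (nat \<Rightarrow> real) \<Rightarrow> nat \<Rightarrow> nat \<Rightarrow> real" where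
  "B0 \<alpha> r \<mu> \<nu> k l = (\<Sum>i=1..k. \<Sum>j=1..l. theta \<alpha> r \<mu> \<nu> i j * zeta \<alpha> r \<mu> (i - 1) * xi \<alpha> r \<nu> (j - 1))
        + zeta \<alpha> r \<mu> k + xi \<alpha> r \<nu> l"

lemma zeta_nonneg: "0 \<le> zeta \<alpha> r \<mu> i" unfolding zeta_def by simp
lemma xi_nonneg: "0 \<le> xi \<alpha> r \<nu> i" unfolding xi_def by simp
lemma theta_nonneg: "0 \<le> theta \<alpha> r \<mu> \<nu> i j" unfolding theta_def by simp

lemma B0_nonneg: "0 \<le> B0 \<alpha> r \<mu> \<nu> k l"
  unfolding B0_def
  by (intro add_nonneg_nonneg sum_nonneg mult_nonneg_nonneg theta_nonneg zeta_nonneg xi_nonneg)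

lemma G:
  fixes \<alpha> r p :: real and \<mu> \<nu> :: "nat \<Rightarrow> real"
  assumes A: "finite A" "W \<subseteq> A" "L \<subseteq> A" and p: "0 \<le> p" "p \<le> 1"
    and pW: "\<alpha> * r \<le> p * card W" and pL: "p * card L \<le> \<alpha>"
    and al: "0 < \<alpha>" and r: "1 < r" and kl: "0 < k" "0 < l"
    and mu_range: "\<forall>i\<in>{1..k}. 0 < \<mu> i \<and> \<mu> i \<le> 1"
    and nu_range: "\<forall>j\<in>{1..l}. \<nu> j \<ge> \<alpha> / log 2 r"
  shows "E2 p A (\<lambda>\<sigma> \<sigma>'. (1 - (1/2) ^ card {x\<in>L. \<sigma> x}) ^ card {x\<in>W. \<sigma>' x}) \<le> B0 \<alpha> r \<mu> \<nu> k l"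
proof -
  define Xf where "Xf \<sigma> = real (card {x\<in>L. \<sigma> x})" for \<sigma> :: "'a \<Rightarrow> bool"
  define Yf where "Yf \<sigma> = real (card {x\<in>W. \<sigma> x})" for \<sigma> :: "'a \<Rightarrow> bool"
  define a where "a i = \<mu> i * \<alpha> * r" for i
  define b where "b j = \<nu> j * log 2 r" for j
  define th where "th i j = theta \<alpha> r \<mu> \<nu> i j" for i j
  define IY where "IY i \<sigma> = (if i = 1 \<or> Yf \<sigma> \<le> a (i - 1) then 1 else (0::real))" for i \<sigma>
  define IX where "IX j \<sigma> = (if j = 1 \<or> b (j - 1) \<le> Xf \<sigma> then 1 else (0::real))" for j \<sigma>
  have lr: "0 < log 2 r" using r by simp
  have pt: "(1 - (1/2) ^ card {x\<in>L. \<sigma> x}) ^ card {x\<in>W. \<sigma>' x}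
        \<le> (\<Sum>i=1..k. \<Sum>j=1..l. th i j * IY i \<sigma>' * IX j \<sigma>)
            + (if Yf \<sigma>' \<le> a k then 1 else 0) + (if b l \<le> Xf \<sigma> then 1 else 0)" for \<sigma> \<sigma>'
    unfolding IY_def IX_def
  proof (rule layered[OF kl])
    show "0 \<le> th i j" for i j unfolding th_def by (rule theta_nonneg)
    show "(1 - (1/2::real) ^ card {x\<in>L. \<sigma> x}) ^ card {x\<in>W. \<sigma>' x} \<le> 1"
      by (rule power_le_one) (auto simp: power_le_one)
    fix i j assume ij: "1 \<le> i" "i \<le> k" "1 \<le> j" "j \<le> l" and Ya: "a i < Yf \<sigma>'" and Xb: "Xf \<sigma> < b j"
    let ?X = "card {x\<in>L. \<sigma> x}" and ?Y = "card {x\<in>W. \<sigma>' x}"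
    have mu: "0 < \<mu> i" "\<mu> i \<le> 1" using mu_range ij by auto
    have "(1 - (1/2::real) ^ ?X) ^ ?Y \<le> exp (- ((1/2) ^ ?X)) ^ ?Y"
      by (intro power_mono) (use exp_ge_add_one_self[of "- ((1/2::real) ^ ?X)"] in \<open>auto simp: power_le_one\<close>)
    also have "\<dots> = exp (- (real ?Y * (1/2) ^ ?X))" by (simp add: exp_of_nat_mult[symmetric])
    also have "\<dots> \<le> exp (- (\<mu> i * \<alpha> * r powr (1 - \<nu> j)))"
    proof -
      have h1: "r powr (- \<nu> j) \<le> (1/2) ^ ?X"
      proof -
        have "r powr (- \<nu> j) = 2 powr (- (\<nu> j * log 2 r))"
          using r by (simp add: powr_def log_def)
        also have "\<dots> \<le> 2 powr (- real ?X)"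
          using Xb unfolding Xf_def b_def by (intro powr_mono) auto
        also have "\<dots> = (1/2) ^ ?X" by (simp add: powr_minus powr_realpow power_one_over inverse_eq_divide)
        finally show ?thesis .
      qed
      have "\<mu> i * \<alpha> * r powr (1 - \<nu> j) = (\<mu> i * \<alpha> * r) * r powr (- \<nu> j)"
        using r by (simp add: powr_diff powr_minus divide_inverse)
      also have "\<dots> \<le> real ?Y * (1/2) ^ ?X"
        using Ya mu al r h1 unfolding a_def Yf_def
        by (intro mult_mono) auto
      finally show ?thesis by simp
    qed
    finally show "(1 - (1/2) ^ ?X) ^ ?Y \<le> th i j" unfolding th_def theta_def .
  qed
  have "E2 p A (\<lambda>\<sigma> \<sigma>'. (1 - (1/2) ^ card {x\<in>L. \<sigma> x}) ^ card {x\<in>W. \<sigma>' x})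
      \<le> E2 p A (\<lambda>\<sigma> \<sigma>'. (\<Sum>i=1..k. \<Sum>j=1..l. th i j * IY i \<sigma>' * IX j \<sigma>)
            + (if Yf \<sigma>' \<le> a k then 1 else 0) + (if b l \<le> Xf \<sigma> then 1 else 0))"
    by (rule E2_mono[OF p]) (rule pt)
  also have "\<dots> = (\<Sum>i=1..k. \<Sum>j=1..l. th i j * (E1 p A (IY i) * E1 p A (IX j)))
       + E1 p A (\<lambda>\<sigma>. if Yf \<sigma> \<le> a k then 1 else 0) + E1 p A (\<lambda>\<sigma>. if b l \<le> Xf \<sigma> then 1 else 0)"
    by (simp only: E2_add E2_sum E2_prod2 E2_left[OF A(1)] E2_right[OF A(1)])
  also have "\<dots> \<le> B0 \<alpha> r \<mu> \<nu> k l"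
  proof -
    have zY: "E1 p A (\<lambda>\<sigma>. if Yf \<sigma> \<le> a i then 1 else 0) \<le> zeta \<alpha> r \<mu> i" if "i \<in> {1..k}" for i
    proof -
      have mu: "0 < \<mu> i" "\<mu> i \<le> 1" using mu_range that by auto
      have "E1 p A (\<lambda>\<sigma>. if Yf \<sigma> \<le> a i then 1 else 0) \<le> exp (- (\<alpha> * r)) * (exp 1 / \<mu> i) powr (\<mu> i * (\<alpha> * r))"
        unfolding Yf_def a_def mult.assoc
        by (rule chernoff_lower[OF A(1,2) p pW mu]) (use al r in simp)
      then show ?thesis using that unfolding zeta_def by (simp add: mult.assoc)
    qed
    have xX: "E1 p A (\<lambda>\<sigma>. if b j \<le> Xf \<sigma> then 1 else 0) \<le> xi \<alpha> r \<nu> j" if "j \<in> {1..l}" for j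
    proof -
      have "\<alpha> / log 2 r \<le> \<nu> j" using nu_range that by auto
      then have at: "\<alpha> \<le> b j" unfolding b_def using lr by (simp add: divide_le_eq)
      have "E1 p A (\<lambda>\<sigma>. if b j \<le> Xf \<sigma> then 1 else 0) \<le> exp (- \<alpha>) * (exp 1 * \<alpha> / b j) powr b j"
        unfolding Xf_def by (rule chernoff_upper[OF A(1,3) p pL al at])
      also have "\<dots> = xi \<alpha> r \<nu> j"
        using that xi_eq[OF r al b_def at] unfolding xi_def by simp
      finally show ?thesis .
    qed
    have IYb: "E1 p A (IY i) \<le> zeta \<alpha> r \<mu> (i - 1)" if "i \<in> {1..k}" for i
    proof (cases "i = 1")
      case True
      then show ?thesis unfolding IY_def zeta_def using E1_one[OF A(1)] by simp
    next
      case False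
      then have "i - 1 \<in> {1..k}" using that by auto
      then show ?thesis using zY[of "i - 1"] False unfolding IY_def by simp
    qed
    have IXb: "E1 p A (IX j) \<le> xi \<alpha> r \<nu> (j - 1)" if "j \<in> {1..l}" for j
    proof (cases "j = 1")
      case True
      then show ?thesis unfolding IX_def xi_def using E1_one[OF A(1)] by simp
    next
      case False
      then have "j - 1 \<in> {1..l}" using that by auto
      then show ?thesis using xX[of "j - 1"] False unfolding IX_def by simp
    qed
    have "(\<Sum>i=1..k. \<Sum>j=1..l. th i j * (E1 p A (IY i) * E1 p A (IX j)))
        \<le> (\<Sum>i=1..k. \<Sum>j=1..l. theta \<alpha> r \<mu> \<nu> i j * zeta \<alpha> r \<mu> (i - 1) * xi \<alpha> r \<nu> (j - 1))"
    proof (intro sum_mono)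
      fix i j assume "i \<in> {1..k}" "j \<in> {1..l}"
      have "E1 p A (IY i) * E1 p A (IX j) \<le> zeta \<alpha> r \<mu> (i - 1) * xi \<alpha> r \<nu> (j - 1)"
        by (intro mult_mono IYb IXb \<open>i \<in> {1..k}\<close> \<open>j \<in> {1..l}\<close> zeta_nonneg E1_nonneg p)
           (auto simp: IX_def)
      then show "th i j * (E1 p A (IY i) * E1 p A (IX j))
           \<le> theta \<alpha> r \<mu> \<nu> i j * zeta \<alpha> r \<mu> (i - 1) * xi \<alpha> r \<nu> (j - 1)"
        unfolding th_def mult.assoc by (intro mult_left_mono theta_nonneg)
    qed
    moreover have "E1 p A (\<lambda>\<sigma>. if Yf \<sigma> \<le> a k then 1 else 0) \<le> zeta \<alpha> r \<mu> k" using zY kl by simp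
    moreover have "E1 p A (\<lambda>\<sigma>. if b l \<le> Xf \<sigma> then 1 else 0) \<le> xi \<alpha> r \<nu> l" using xX kl by simp
    ultimately show ?thesis unfolding B0_def by linarith
  qed
  finally show ?thesis .
qed




lemma supinf_le:
  fixes F :: "'x \<Rightarrow> 'y \<Rightarrow> real"
  assumes "Sx \<noteq> {}" "\<And>x y. x \<in> Sx \<Longrightarrow> y \<in> Sy \<Longrightarrow> 0 \<le> F x y"
    "\<And>x. x \<in> Sx \<Longrightarrow> \<exists>y\<in>Sy. F x y \<le> c"
  shows "(SUP x\<in>Sx. INF y\<in>Sy. F x y) \<le> c"
proof (rule cSUP_least[OF assms(1)])
  fix x assume x: "x \<in> Sx"
  then obtain y where y: "y \<in> Sy" "F x y \<le> c" using assms(3) by blast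
  have "(INF y\<in>Sy. F x y) \<le> F x y"
    by (rule cINF_lower[OF _ y(1)]) (use assms(2) x in \<open>auto intro!: bdd_belowI2\<close>)
  then show "(INF y\<in>Sy. F x y) \<le> c" using y by simp
qed

definition pm :: "'b \<Rightarrow> 'b \<Rightarrow> real" where "pm b = (\<lambda>x. if x = b then 1 else 0)"

lemma pm_mixed: "finite X \<Longrightarrow> b \<in> X \<Longrightarrow> pm b \<in> mixed X"
  unfolding mixed_def pm_def by auto

lemma pay_nonneg:
  assumes "p1 \<in> mixed X1" "p2 \<in> mixed X2" "\<And>a b. a \<in> X1 \<Longrightarrow> b \<in> X2 \<Longrightarrow> 0 \<le> f a b"
  shows "0 \<le> (\<Sum>a\<in>X1. \<Sum>b\<in>X2. p1 a * p2 b * f a b)"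
  using assms unfolding mixed_def by (intro sum_nonneg mult_nonneg_nonneg) auto

lemma pay_le1:
  assumes "p1 \<in> mixed X1" "p2 \<in> mixed X2" "\<And>a b. a \<in> X1 \<Longrightarrow> b \<in> X2 \<Longrightarrow> f a b \<le> 1"
  shows "(\<Sum>a\<in>X1. \<Sum>b\<in>X2. p1 a * p2 b * f a b) \<le> 1"
proof -
  have "(\<Sum>a\<in>X1. \<Sum>b\<in>X2. p1 a * p2 b * f a b) \<le> (\<Sum>a\<in>X1. \<Sum>b\<in>X2. p1 a * p2 b)"
    using assms unfolding mixed_def
    by (intro sum_mono) (auto intro!: mult_left_le)
  also have "\<dots> = sum p1 X1 * sum p2 X2" by (simp add: sum_product)
  also have "\<dots> = 1" using assms unfolding mixed_def by simp
  finally show ?thesis .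
qed

lemma val1:
  assumes fin: "finite X1" "finite X2" and ne: "a0 \<in> X1" "b0 \<in> X2"
    and f01: "\<And>a b. a \<in> X1 \<Longrightarrow> b \<in> X2 \<Longrightarrow> 0 \<le> f a b \<and> f a b \<le> 1"
  shows "(SUP p1\<in>mixed X1. INF p2\<in>mixed X2. \<Sum>a\<in>X1. \<Sum>b\<in>X2. p1 a * p2 b * f a b)
     \<le> (if \<exists>b\<in>X2. \<forall>a\<in>X1. f a b = 0 then 0 else 1)"
proof (rule supinf_le)
  show "mixed X1 \<noteq> {}" using pm_mixed[OF fin(1) ne(1)] by blast
  show "0 \<le> (\<Sum>a\<in>X1. \<Sum>b\<in>X2. p1 a * p2 b * f a b)" if "p1 \<in> mixed X1" "p2 \<in> mixed X2" for p1 p2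
    by (rule pay_nonneg[OF that]) (use f01 in blast)
  fix p1 assume p1: "p1 \<in> mixed X1"
  show "\<exists>p2\<in>mixed X2. (\<Sum>a\<in>X1. \<Sum>b\<in>X2. p1 a * p2 b * f a b) \<le> (if \<exists>b\<in>X2. \<forall>a\<in>X1. f a b = 0 then 0 else 1)"
  proof (cases "\<exists>b\<in>X2. \<forall>a\<in>X1. f a b = 0")
    case True
    then obtain b where b: "b \<in> X2" "\<forall>a\<in>X1. f a b = 0" by blast
    have e: "(\<Sum>b'\<in>X2. p1 a * pm b b' * f a b') = p1 a * f a b" for a
    proof -
      have "(\<Sum>b'\<in>X2. p1 a * pm b b' * f a b') = (\<Sum>b'\<in>X2. if b' = b then p1 a * f a b' else 0)"
        by (intro sum.cong) (auto simp: pm_def)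
      then show ?thesis using fin b(1) by simp
    qed
    have "(\<Sum>a\<in>X1. \<Sum>b'\<in>X2. p1 a * pm b b' * f a b') = (\<Sum>a\<in>X1. p1 a * f a b)"
      by (simp add: e)
    also have "\<dots> = 0" using b by simp
    finally show ?thesis using True pm_mixed[OF fin(2) b(1)] by (intro bexI[of _ "pm b"]) auto
  next
    case False
    show ?thesis using False pm_mixed[OF fin(2) ne(2)] pay_le1[OF p1 pm_mixed[OF fin(2) ne(2)], of f] f01
      by (intro bexI[of _ "pm b0"]) auto
  qed
qed

lemma val2:
  assumes fin: "finite X1" "finite X2" and ne: "a0 \<in> X1" "b0 \<in> X2"
    and f01: "\<And>a b. a \<in> X1 \<Longrightarrow> b \<in> X2 \<Longrightarrow> 0 \<le> f a b \<and> f a b \<le> 1"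
  shows "(SUP p2\<in>mixed X2. INF p1\<in>mixed X1. \<Sum>a\<in>X1. \<Sum>b\<in>X2. p1 a * p2 b * f a b)
     \<le> (if \<exists>a\<in>X1. \<forall>b\<in>X2. f a b = 0 then 0 else 1)"
proof -
  have eq: "(\<Sum>a\<in>X1. \<Sum>b\<in>X2. p1 a * p2 b * f a b) = (\<Sum>b\<in>X2. \<Sum>a\<in>X1. p2 b * p1 a * (\<lambda>x y. f y x) b a)" for p1 p2
    by (subst sum.swap) (simp add: mult.commute)
  show ?thesis unfolding eq
    by (rule val1[OF fin(2,1) ne(2,1)]) (use f01 in auto)
qed

definition v2 :: "('a \<Rightarrow> bool) \<Rightarrow> ('a \<Rightarrow> bool) \<Rightarrow> ('a \<Rightarrow> 'a \<Rightarrow> bool) \<Rightarrow> 'a option \<Rightarrow> 'a option \<Rightarrow> real" where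
  "v2 \<sigma>1 \<sigma>2 D a1 a2 = (case a1 of
      None \<Rightarrow> (case a2 of None \<Rightarrow> 1/2 | Some y \<Rightarrow> if \<sigma>2 y then 1 else 1/2)
    | Some x \<Rightarrow> (case a2 of None \<Rightarrow> if \<sigma>1 x then 0 else 1/2
        | Some y \<Rightarrow> if \<sigma>1 x \<and> \<sigma>2 y then (if D y x then 1 else 0)
                   else if \<sigma>2 y then 1 else if \<sigma>1 x then 0 else 1/2))"

definition pol :: "('a \<Rightarrow> bool) \<Rightarrow> ('a \<Rightarrow> bool) \<Rightarrow> ('a \<Rightarrow> 'a \<Rightarrow> bool) \<Rightarrow> nat \<Rightarrow> 'a option \<Rightarrow> 'a option \<Rightarrow> real" where
  "pol \<sigma>1 \<sigma>2 D i a1 a2 = (if i = 1 then 1 - v2 \<sigma>1 \<sigma>2 D a1 a2 else v2 \<sigma>1 \<sigma>2 D a1 a2)"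

lemma v2_range: "0 \<le> v2 \<sigma>1 \<sigma>2 D a1 a2" "v2 \<sigma>1 \<sigma>2 D a1 a2 \<le> 1"
  unfolding v2_def by (auto split: option.split)

lemma pol_policy: "is_policy A (pol \<sigma>1 \<sigma>2 D)"
  unfolding is_policy_def pol_def by (auto simp: v2_range)

definition Ig :: "'a set \<Rightarrow> 'a set \<Rightarrow> ('a \<Rightarrow> bool) \<Rightarrow> ('a \<Rightarrow> bool) \<Rightarrow> ('a \<Rightarrow> 'a \<Rightarrow> bool) \<Rightarrow> real" where
  "Ig W L \<sigma>w \<sigma>l D = (if \<exists>w\<in>W. \<sigma>w w \<and> (\<forall>l\<in>L. \<sigma>l l \<longrightarrow> D w l) then 0 else 1)"

definition tr :: "'a set \<Rightarrow> ('a \<Rightarrow> 'a \<Rightarrow> bool) \<Rightarrow> ('a \<Rightarrow> 'a \<Rightarrow> bool)" where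
  "tr A D = (\<lambda>w\<in>A. \<lambda>l\<in>A. \<not> D l w)"

lemma gv12:
  assumes "finite (Cw s)" "finite (Cl s)"
  shows "game_value (pol \<sigma>1 \<sigma>2 D) Cw Cl 1 2 s \<le> Ig (Cw s) (Cl s) \<sigma>2 \<sigma>1 D"
proof -
  let ?W = "insert None (Some ` Cw s)" and ?L = "insert None (Some ` Cl s)"
  have "game_value (pol \<sigma>1 \<sigma>2 D) Cw Cl 1 2 s =
     (SUP p1\<in>mixed ?L. INF p2\<in>mixed ?W. \<Sum>a\<in>?L. \<Sum>b\<in>?W. p1 a * p2 b * pol \<sigma>1 \<sigma>2 D 1 a b)"
    unfolding game_value_def Let_def by simp
  also have "\<dots> \<le> (if \<exists>b\<in>?W. \<forall>a\<in>?L. pol \<sigma>1 \<sigma>2 D 1 a b = 0 then 0 else 1)"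
    by (rule val1[of _ _ None None]) (use assms in \<open>auto simp: pol_def v2_range\<close>)
  also have "\<dots> \<le> Ig (Cw s) (Cl s) \<sigma>2 \<sigma>1 D"
  proof (cases "\<exists>w\<in>Cw s. \<sigma>2 w \<and> (\<forall>l\<in>Cl s. \<sigma>1 l \<longrightarrow> D w l)")
    case True
    then obtain w where w: "w \<in> Cw s" "\<sigma>2 w" "\<forall>l\<in>Cl s. \<sigma>1 l \<longrightarrow> D w l" by blast
    have "\<forall>a\<in>?L. pol \<sigma>1 \<sigma>2 D 1 a (Some w) = 0"
      using w by (auto simp: pol_def v2_def)
    then show ?thesis using w True unfolding Ig_def by auto
  next
    case False
    then show ?thesis unfolding Ig_def by auto
  qed
  finally show ?thesis .
qed

lemma gv21:
  assumes "finite (Cw s)" "finite (Cl s)" "Cw s \<subseteq> A" "Cl s \<subseteq> A"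
  shows "game_value (pol \<sigma>1 \<sigma>2 D) Cw Cl 2 1 s \<le> Ig (Cw s) (Cl s) \<sigma>1 \<sigma>2 (tr A D)"
proof -
  let ?W = "insert None (Some ` Cw s)" and ?L = "insert None (Some ` Cl s)"
  have "game_value (pol \<sigma>1 \<sigma>2 D) Cw Cl 2 1 s =
     (SUP p2\<in>mixed ?L. INF p1\<in>mixed ?W. \<Sum>a\<in>?W. \<Sum>b\<in>?L. p1 a * p2 b * pol \<sigma>1 \<sigma>2 D 2 a b)"
    unfolding game_value_def Let_def by simp
  also have "\<dots> \<le> (if \<exists>a\<in>?W. \<forall>b\<in>?L. pol \<sigma>1 \<sigma>2 D 2 a b = 0 then 0 else 1)"
    by (rule val2[of _ _ None None]) (use assms in \<open>auto simp: pol_def v2_range\<close>)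
  also have "\<dots> \<le> Ig (Cw s) (Cl s) \<sigma>1 \<sigma>2 (tr A D)"
  proof (cases "\<exists>w\<in>Cw s. \<sigma>1 w \<and> (\<forall>l\<in>Cl s. \<sigma>2 l \<longrightarrow> tr A D w l)")
    case True
    then obtain w where w: "w \<in> Cw s" "\<sigma>1 w" "\<forall>l\<in>Cl s. \<sigma>2 l \<longrightarrow> tr A D w l" by blast
    have "\<forall>l\<in>Cl s. \<sigma>2 l \<longrightarrow> \<not> D l w"
    proof (intro ballI impI)
      fix l assume l: "l \<in> Cl s" "\<sigma>2 l"
      then have "tr A D w l" using w by blast
      moreover have "w \<in> A" "l \<in> A" using w(1) l(1) assms(3,4) by auto
      ultimately show "\<not> D l w" by (simp add: tr_def)
    qed
    then have "\<forall>b\<in>?L. pol \<sigma>1 \<sigma>2 D 2 (Some w) b = 0"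
      using w by (auto simp: pol_def v2_def)
    then show ?thesis using w True unfolding Ig_def by auto
  next
    case False
    then show ?thesis unfolding Ig_def by auto
  qed
  finally show ?thesis .
qed




definition OD :: "'a set \<Rightarrow> ('a \<Rightarrow> 'a \<Rightarrow> bool) set" where
  "OD A = PiE A (\<lambda>_. Om A)"

definition wD :: "'a set \<Rightarrow> real" where
  "wD A = (\<Prod>w\<in>A. \<Prod>x\<in>A. (1/2::real))"

lemma finite_OD: "finite A \<Longrightarrow> finite (OD A)"
  unfolding OD_def by (intro finite_PiE finite_Om)

lemma prod01:
  assumes "finite A"
  shows "(\<Prod>x\<in>A. if P x then 0 else (1::real)) = (if \<exists>x\<in>A. P x then 0 else 1)"
  using assms by (induct A rule: finite_induct) auto

lemma half_sum: "finite A \<Longrightarrow> (\<Sum>d\<in>Om A. \<Prod>x\<in>A. (1/2::real)) = 1"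
  using E_prod[of A "\<lambda>x b. 1/2"] by simp

lemma half_ind:
  assumes A: "finite A" "L \<subseteq> A"
  shows "(\<Sum>d\<in>Om A. (\<Prod>x\<in>A. (1/2::real)) * (if \<forall>l\<in>L. \<sigma>l l \<longrightarrow> d l then 1 else 0))
       = (1/2) ^ card {x\<in>L. \<sigma>l x}"
proof -
  have "(\<Sum>d\<in>Om A. (\<Prod>x\<in>A. (1/2::real)) * (if \<forall>l\<in>L. \<sigma>l l \<longrightarrow> d l then 1 else 0))
      = (\<Sum>d\<in>Om A. \<Prod>x\<in>A. (1/2) * (if x \<in> L \<and> \<sigma>l x \<and> \<not> d x then 0 else 1))"
  proof (intro sum.cong refl)
    fix d :: "'a \<Rightarrow> bool"
    have "(if \<forall>l\<in>L. \<sigma>l l \<longrightarrow> d l then 1 else 0) = (\<Prod>x\<in>A. if x \<in> L \<and> \<sigma>l x \<and> \<not> d x then 0 else (1::real))"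
      using prod01[OF A(1), of "\<lambda>x. x \<in> L \<and> \<sigma>l x \<and> \<not> d x"] A(2) by auto
    then show "(\<Prod>x\<in>A. (1/2::real)) * (if \<forall>l\<in>L. \<sigma>l l \<longrightarrow> d l then 1 else 0)
        = (\<Prod>x\<in>A. (1/2) * (if x \<in> L \<and> \<sigma>l x \<and> \<not> d x then 0 else 1))"
      by (simp only: prod.distrib)
  qed
  also have "\<dots> = (\<Prod>x\<in>A. if x \<in> L \<and> \<sigma>l x then 1/2 else 1)"
    by (subst E_prod[OF A(1)]) (intro prod.cong, auto)
  also have "\<dots> = (1/2) ^ card {x\<in>A. x \<in> L \<and> \<sigma>l x}" by (rule prod_if_pow[OF A(1)])
  also have "{x\<in>A. x \<in> L \<and> \<sigma>l x} = {x\<in>L. \<sigma>l x}" using A by auto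
  finally show ?thesis .
qed

lemma DA:
  assumes A: "finite A" "W \<subseteq> A" "L \<subseteq> A"
  shows "(\<Sum>D\<in>OD A. wD A * Ig W L \<sigma>w \<sigma>l D) = (1 - (1/2) ^ card {x\<in>L. \<sigma>l x}) ^ card {x\<in>W. \<sigma>w x}"
proof -
  define F where "F w d = (\<Prod>x\<in>A. (1/2::real)) * (if w \<in> W \<and> \<sigma>w w \<and> (\<forall>l\<in>L. \<sigma>l l \<longrightarrow> d l) then 0 else 1)"
    for w and d :: "'a \<Rightarrow> bool"
  have "(\<Sum>D\<in>OD A. wD A * Ig W L \<sigma>w \<sigma>l D) = (\<Sum>D\<in>OD A. \<Prod>w\<in>A. F w (D w))"
  proof (intro sum.cong refl)
    fix D :: "'a \<Rightarrow> 'a \<Rightarrow> bool"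
    have "Ig W L \<sigma>w \<sigma>l D = (\<Prod>w\<in>A. if w \<in> W \<and> \<sigma>w w \<and> (\<forall>l\<in>L. \<sigma>l l \<longrightarrow> D w l) then 0 else 1)"
      using prod01[OF A(1), of "\<lambda>w. w \<in> W \<and> \<sigma>w w \<and> (\<forall>l\<in>L. \<sigma>l l \<longrightarrow> D w l)"] A(2)
      unfolding Ig_def by auto
    then show "wD A * Ig W L \<sigma>w \<sigma>l D = (\<Prod>w\<in>A. F w (D w))"
      unfolding wD_def F_def by (simp add: prod.distrib)
  qed
  also have "\<dots> = (\<Prod>w\<in>A. \<Sum>d\<in>Om A. F w d)"
    unfolding OD_def using prod_sum_PiE[of A "\<lambda>_. Om A" F] A(1) finite_Om[OF A(1)] by simp
  also have "\<dots> = (\<Prod>w\<in>A. if w \<in> W \<and> \<sigma>w w then 1 - (1/2) ^ card {x\<in>L. \<sigma>l x} else 1)"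
  proof (intro prod.cong refl)
    fix w assume "w \<in> A"
    show "(\<Sum>d\<in>Om A. F w d) = (if w \<in> W \<and> \<sigma>w w then 1 - (1/2) ^ card {x\<in>L. \<sigma>l x} else 1)"
    proof (cases "w \<in> W \<and> \<sigma>w w")
      case True
      then have "(\<Sum>d\<in>Om A. F w d) = (\<Sum>d\<in>Om A. (\<Prod>x\<in>A. (1/2::real)) - (\<Prod>x\<in>A. (1/2::real)) * (if \<forall>l\<in>L. \<sigma>l l \<longrightarrow> d l then 1 else 0))"
        unfolding F_def by (intro sum.cong refl) auto
      also have "\<dots> = 1 - (1/2) ^ card {x\<in>L. \<sigma>l x}"
        by (simp only: sum_subtractf half_sum[OF A(1)] half_ind[OF A(1,3)])
      finally show ?thesis using True by simp
    next
      case False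
      have e: "F w d = (\<Prod>x\<in>A. (1/2::real))" for d using False unfolding F_def by auto
      have "(\<Sum>d\<in>Om A. F w d) = 1" by (simp only: e half_sum[OF A(1)])
      then show ?thesis using False by simp
    qed
  qed
  also have "\<dots> = (1 - (1/2) ^ card {x\<in>L. \<sigma>l x}) ^ card {x\<in>A. x \<in> W \<and> \<sigma>w x}"
    by (rule prod_if_pow[OF A(1)])
  also have "{x\<in>A. x \<in> W \<and> \<sigma>w x} = {x\<in>W. \<sigma>w x}" using A by auto
  finally show ?thesis .
qed

lemma tr_OD: "D \<in> OD A \<Longrightarrow> tr A D \<in> OD A"
  unfolding OD_def Om_def tr_def by auto

lemma tr_tr: "D \<in> OD A \<Longrightarrow> tr A (tr A D) = D"
  unfolding OD_def Om_def tr_def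
  by (auto simp: fun_eq_iff PiE_def extensional_def)

lemma DA_tr: "(\<Sum>D\<in>OD A. wD A * G (tr A D)) = (\<Sum>D\<in>OD A. wD A * G D)"
  by (rule sum.reindex_bij_witness[of _ "tr A" "tr A"]) (auto simp: tr_OD tr_tr)




definition Om3 :: "'a set \<Rightarrow> (('a \<Rightarrow> bool) \<times> ('a \<Rightarrow> bool) \<times> ('a \<Rightarrow> 'a \<Rightarrow> bool)) set" where
  "Om3 A = Om A \<times> Om A \<times> OD A"

definition w3 :: "real \<Rightarrow> 'a set \<Rightarrow> ('a \<Rightarrow> bool) \<times> ('a \<Rightarrow> bool) \<times> ('a \<Rightarrow> 'a \<Rightarrow> bool) \<Rightarrow> real" where
  "w3 p A \<omega> = (case \<omega> of (\<sigma>1, \<sigma>2, D) \<Rightarrow> wt p A \<sigma>1 * wt p A \<sigma>2 * wD A)"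

definition E3 :: "real \<Rightarrow> 'a set \<Rightarrow> (('a \<Rightarrow> bool) \<times> ('a \<Rightarrow> bool) \<times> ('a \<Rightarrow> 'a \<Rightarrow> bool) \<Rightarrow> real) \<Rightarrow> real" where
  "E3 p A f = (\<Sum>\<omega>\<in>Om3 A. w3 p A \<omega> * f \<omega>)"

lemma E3_nested:
  "E3 p A (\<lambda>(\<sigma>1, \<sigma>2, D). F \<sigma>1 \<sigma>2 D) =
    (\<Sum>\<sigma>1\<in>Om A. \<Sum>\<sigma>2\<in>Om A. \<Sum>D\<in>OD A. wt p A \<sigma>1 * wt p A \<sigma>2 * wD A * F \<sigma>1 \<sigma>2 D)"
  unfolding E3_def Om3_def w3_def by (simp add: sum.cartesian_product split_def)

lemma wD_sum: "finite A \<Longrightarrow> (\<Sum>D\<in>OD A. wD A) = 1"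
proof -
  assume A: "finite A"
  have "(\<Sum>D\<in>OD A. wD A) = (\<Sum>D\<in>OD A. \<Prod>w\<in>A. (\<lambda>w d. \<Prod>x\<in>A. (1/2::real)) w (D w))"
    unfolding wD_def by simp
  also have "\<dots> = (\<Prod>w\<in>A. \<Sum>d\<in>Om A. \<Prod>x\<in>A. (1/2::real))"
    unfolding OD_def using prod_sum_PiE[of A "\<lambda>_. Om A" "\<lambda>w d. \<Prod>x\<in>A. (1/2::real)"] A finite_Om[OF A]
    by simp
  also have "\<dots> = 1" by (simp only: half_sum[OF A]) simp
  finally show ?thesis .
qed

lemma wt_sum: "finite A \<Longrightarrow> (\<Sum>\<sigma>\<in>Om A. wt p A \<sigma>) = 1"
  using E1_one[of A p] unfolding E1_def by simp

lemma E3_one: "finite A \<Longrightarrow> E3 p A (\<lambda>_. 1) = 1"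
proof -
  assume A: "finite A"
  have "E3 p A (\<lambda>_. 1) = E3 p A (\<lambda>(\<sigma>1, \<sigma>2, D). 1)" by (simp add: split_def)
  also have "\<dots> = (\<Sum>\<sigma>1\<in>Om A. \<Sum>\<sigma>2\<in>Om A. wt p A \<sigma>1 * wt p A \<sigma>2 * (\<Sum>D\<in>OD A. wD A))"
    unfolding E3_nested by (simp add: sum_distrib_left mult_ac)
  also have "\<dots> = (\<Sum>\<sigma>1\<in>Om A. wt p A \<sigma>1 * (\<Sum>\<sigma>2\<in>Om A. wt p A \<sigma>2))"
  proof -
    have h: "real (card (OD A)) * wD A = 1" using wD_sum[OF A] by simp
    show ?thesis by (simp add: h sum_distrib_left)
  qed
  also have "\<dots> = 1" by (simp add: wt_sum[OF A])
  finally show ?thesis .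
qed

lemma w3_nonneg: "0 \<le> p \<Longrightarrow> p \<le> 1 \<Longrightarrow> 0 \<le> w3 p A \<omega>"
  unfolding w3_def wD_def by (auto split: prod.split intro!: mult_nonneg_nonneg wt_nonneg prod_nonneg)

lemma E3_mono:
  assumes "0 \<le> p" "p \<le> 1" "\<And>\<omega>. \<omega> \<in> Om3 A \<Longrightarrow> f \<omega> \<le> g \<omega>"
  shows "E3 p A f \<le> E3 p A g"
  unfolding E3_def by (intro sum_mono mult_left_mono assms w3_nonneg)

lemma E3_lin:
  "E3 p A (\<lambda>\<omega>. \<Sum>s\<in>S. P s * ((f s \<omega> + g s \<omega>) / 2)) = (\<Sum>s\<in>S. P s * ((E3 p A (f s) + E3 p A (g s)) / 2))"
  unfolding E3_def
  by (simp add: sum_distrib_left sum_distrib_right sum.swap[of _ S] sum.distrib add_divide_distrib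
       sum_divide_distrib algebra_simps)

lemma E3_I2:
  assumes A: "finite A" "W \<subseteq> A" "L \<subseteq> A"
  shows "E3 p A (\<lambda>(\<sigma>1, \<sigma>2, D). Ig W L \<sigma>2 \<sigma>1 D)
     = E2 p A (\<lambda>\<sigma> \<sigma>'. (1 - (1/2) ^ card {x\<in>L. \<sigma> x}) ^ card {x\<in>W. \<sigma>' x})"
  unfolding E3_nested E2_def
proof (intro sum.cong refl)
  fix \<sigma>1 \<sigma>2
  have "(\<Sum>D\<in>OD A. wt p A \<sigma>1 * wt p A \<sigma>2 * wD A * Ig W L \<sigma>2 \<sigma>1 D)
      = wt p A \<sigma>1 * wt p A \<sigma>2 * (\<Sum>D\<in>OD A. wD A * Ig W L \<sigma>2 \<sigma>1 D)"
    by (simp add: sum_distrib_left mult.assoc)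
  also have "\<dots> = wt p A \<sigma>1 * wt p A \<sigma>2 * (1 - (1/2) ^ card {x\<in>L. \<sigma>1 x}) ^ card {x\<in>W. \<sigma>2 x}"
    by (simp only: DA[OF A])
  finally show "(\<Sum>D\<in>OD A. wt p A \<sigma>1 * wt p A \<sigma>2 * wD A * Ig W L \<sigma>2 \<sigma>1 D)
      = wt p A \<sigma>1 * wt p A \<sigma>2 * (1 - (1/2) ^ card {x\<in>L. \<sigma>1 x}) ^ card {x\<in>W. \<sigma>2 x}" .
qed

lemma E3_I1:
  assumes A: "finite A" "W \<subseteq> A" "L \<subseteq> A"
  shows "E3 p A (\<lambda>(\<sigma>1, \<sigma>2, D). Ig W L \<sigma>1 \<sigma>2 (tr A D))
     = E2 p A (\<lambda>\<sigma> \<sigma>'. (1 - (1/2) ^ card {x\<in>L. \<sigma> x}) ^ card {x\<in>W. \<sigma>' x})"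
proof -
  have "E3 p A (\<lambda>(\<sigma>1, \<sigma>2, D). Ig W L \<sigma>1 \<sigma>2 (tr A D))
     = (\<Sum>\<sigma>1\<in>Om A. \<Sum>\<sigma>2\<in>Om A. wt p A \<sigma>1 * wt p A \<sigma>2 * (1 - (1/2) ^ card {x\<in>L. \<sigma>2 x}) ^ card {x\<in>W. \<sigma>1 x})"
    unfolding E3_nested
  proof (intro sum.cong refl)
    fix \<sigma>1 \<sigma>2
    have "(\<Sum>D\<in>OD A. wt p A \<sigma>1 * wt p A \<sigma>2 * wD A * Ig W L \<sigma>1 \<sigma>2 (tr A D))
        = wt p A \<sigma>1 * wt p A \<sigma>2 * (\<Sum>D\<in>OD A. wD A * Ig W L \<sigma>1 \<sigma>2 (tr A D))"
      by (simp add: sum_distrib_left mult.assoc)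
    also have "\<dots> = wt p A \<sigma>1 * wt p A \<sigma>2 * (\<Sum>D\<in>OD A. wD A * Ig W L \<sigma>1 \<sigma>2 D)"
      by (simp only: DA_tr)
    also have "\<dots> = wt p A \<sigma>1 * wt p A \<sigma>2 * (1 - (1/2) ^ card {x\<in>L. \<sigma>2 x}) ^ card {x\<in>W. \<sigma>1 x}"
      by (simp only: DA[OF A])
    finally show "(\<Sum>D\<in>OD A. wt p A \<sigma>1 * wt p A \<sigma>2 * wD A * Ig W L \<sigma>1 \<sigma>2 (tr A D))
        = wt p A \<sigma>1 * wt p A \<sigma>2 * (1 - (1/2) ^ card {x\<in>L. \<sigma>2 x}) ^ card {x\<in>W. \<sigma>1 x}" .
  qed
  also have "\<dots> = E2 p A (\<lambda>\<sigma> \<sigma>'. (1 - (1/2) ^ card {x\<in>L. \<sigma> x}) ^ card {x\<in>W. \<sigma>' x})"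
    unfolding E2_def by (subst sum.swap) (simp add: mult.commute)
  finally show ?thesis .
qed

lemma ex_le:
  fixes w f :: "'b \<Rightarrow> real"
  assumes "finite X" "\<And>x. x \<in> X \<Longrightarrow> 0 \<le> w x" "sum w X = 1" "(\<Sum>x\<in>X. w x * f x) \<le> B"
  shows "\<exists>x\<in>X. f x \<le> B"
proof (rule ccontr)
  assume "\<not> ?thesis"
  then have gt: "\<And>x. x \<in> X \<Longrightarrow> B < f x" by auto
  obtain x0 where x0: "x0 \<in> X" "w x0 \<noteq> 0"
    using assms(3) by (metis sum.neutral zero_neq_one)
  have "0 < (\<Sum>x\<in>X. w x * (f x - B))"
  proof (rule sum_pos2[OF assms(1) x0(1)])
    show "0 < w x0 * (f x0 - B)" using x0 assms(2)[OF x0(1)] gt[OF x0(1)] by simp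
    show "\<And>x. x \<in> X \<Longrightarrow> 0 \<le> w x * (f x - B)" using assms(2) gt by (simp add: less_imp_le)
  qed
  also have "(\<Sum>x\<in>X. w x * (f x - B)) = (\<Sum>x\<in>X. w x * f x) - B"
    using assms(3) by (simp add: right_diff_distrib sum_subtractf sum_distrib_right[symmetric])
  finally show False using assms(4) by simp
qed




theorem theorem5p1:
  fixes A :: "'a set" and S :: "'s set" and P :: "'s \<Rightarrow> real"
    and Cw Cl :: "'s \<Rightarrow> 'a set"
    and m n k l :: nat and \<epsilon> \<alpha> :: real and \<mu> \<nu> :: "nat \<Rightarrow> real"
  assumes game: "ckddg A S P Cw Cl"
    and mpos: "m > 0" and npos: "n > 0"
    and eps: "\<epsilon> \<in> {0..1}"
    and bad: "(\<Sum>s\<in>{s\<in>S. card (Cw s) < m \<or> card (Cl s) > n}. P s) \<le> \<epsilon>"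
    and mn: "m > n"
    and alpha: "0 < \<alpha>" "\<alpha> \<le> 1"
    and kpos: "k > 0" and lpos: "l > 0"
    and mu_range: "\<forall>i\<in>{1..k}. 0 < \<mu> i \<and> \<mu> i \<le> 1"
    and mu_mono: "\<forall>i j. 1 \<le> i \<and> i \<le> j \<and> j \<le> k \<longrightarrow> \<mu> j \<le> \<mu> i"
    and nu_range: "\<forall>j\<in>{1..l}. \<nu> j \<ge> \<alpha> / log 2 (real m / real n)"
    and nu_mono: "\<forall>i j. 1 \<le> i \<and> i \<le> j \<and> j \<le> l \<longrightarrow> \<nu> i \<le> \<nu> j"
  shows "\<exists>M. is_policy A M \<and>
    policy_error S P Cw Cl M \<le>
      (let r = real m / real n in
        (\<Sum>i=1..k. \<Sum>j=1..l. theta \<alpha> r \<mu> \<nu> i j * zeta \<alpha> r \<mu> (i - 1) * xi \<alpha> r \<nu> (j - 1))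
        + zeta \<alpha> r \<mu> k + xi \<alpha> r \<nu> l + \<epsilon>)"
proof -
  have finA: "finite A" and finS: "finite S" and Pnn: "\<And>s. s \<in> S \<Longrightarrow> 0 \<le> P s"
    and Psum: "sum P S = 1" and CwA: "\<And>s. s \<in> S \<Longrightarrow> Cw s \<subseteq> A" and ClA: "\<And>s. s \<in> S \<Longrightarrow> Cl s \<subseteq> A"
    using game unfolding ckddg_def by auto
  define p where "p = \<alpha> / real n"
  define r where "r = real m / real n"
  have p0: "0 \<le> p" and p1: "p \<le> 1" using alpha npos by (auto simp: p_def divide_le_eq)
  have r1: "1 < r" using mn npos by (simp add: r_def)
  define isbad where "isbad s \<longleftrightarrow> card (Cw s) < m \<or> card (Cl s) > n" for s
  define B where "B = B0 \<alpha> r \<mu> \<nu> k l"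
  have B0: "0 \<le> B" unfolding B_def by (rule B0_nonneg)
  define errf where "errf \<omega> = policy_error S P Cw Cl (case \<omega> of (\<sigma>1, \<sigma>2, D) \<Rightarrow> pol \<sigma>1 \<sigma>2 D)" for \<omega>
  define I2 where "I2 s = (\<lambda>(\<sigma>1, \<sigma>2, D). Ig (Cw s) (Cl s) \<sigma>2 \<sigma>1 D)" for s
  define I1 where "I1 s = (\<lambda>(\<sigma>1, \<sigma>2, D). Ig (Cw s) (Cl s) \<sigma>1 \<sigma>2 (tr A D))" for s
  have step1: "errf \<omega> \<le> (\<Sum>s\<in>S. P s * ((I2 s \<omega> + I1 s \<omega>) / 2))" for \<omega>
  proof -
    obtain \<sigma>1 \<sigma>2 D where om: "\<omega> = (\<sigma>1, \<sigma>2, D)" by (cases \<omega>) auto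
    show ?thesis unfolding errf_def om policy_error_def I2_def I1_def
    proof (simp only: prod.case, intro sum_mono mult_left_mono Pnn)
      fix s assume s: "s \<in> S"
      have f: "finite (Cw s)" "finite (Cl s)" using finite_subset[OF CwA[OF s] finA] finite_subset[OF ClA[OF s] finA] by auto
      show "(game_value (pol \<sigma>1 \<sigma>2 D) Cw Cl 1 2 s + game_value (pol \<sigma>1 \<sigma>2 D) Cw Cl 2 1 s) / 2
          \<le> (Ig (Cw s) (Cl s) \<sigma>2 \<sigma>1 D + Ig (Cw s) (Cl s) \<sigma>1 \<sigma>2 (tr A D)) / 2"
        using gv12[of Cw s Cl \<sigma>1 \<sigma>2 D, OF f] gv21[of Cw s Cl A \<sigma>1 \<sigma>2 D, OF f CwA[OF s] ClA[OF s]] by simp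
    qed
  qed
  have Igle1: "Ig W L a b D \<le> 1" for W L a b D by (simp add: Ig_def)
  have cb: "E3 p A (I2 s) \<le> (if isbad s then 1 else B) \<and> E3 p A (I1 s) \<le> (if isbad s then 1 else B)"
    if s: "s \<in> S" for s
  proof (cases "isbad s")
    case True
    have "E3 p A (I2 s) \<le> E3 p A (\<lambda>_. 1)"
      by (rule E3_mono[OF p0 p1]) (auto simp: I2_def Igle1 split: prod.split)
    moreover have "E3 p A (I1 s) \<le> E3 p A (\<lambda>_. 1)"
      by (rule E3_mono[OF p0 p1]) (auto simp: I1_def Igle1 split: prod.split)
    ultimately show ?thesis using True E3_one[OF finA, of p] by simp
  next
    case False
    then have cW: "m \<le> card (Cw s)" and cL: "card (Cl s) \<le> n" unfolding isbad_def by auto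
    have pW: "\<alpha> * r \<le> p * real (card (Cw s))"
      using cW alpha npos unfolding p_def r_def by (simp add: field_simps)
    have pL: "p * real (card (Cl s)) \<le> \<alpha>"
      using cL alpha npos unfolding p_def by (simp add: field_simps)
    have nu': "\<forall>j\<in>{1..l}. \<nu> j \<ge> \<alpha> / log 2 r" using nu_range unfolding r_def .
    have Gs: "E2 p A (\<lambda>\<sigma> \<sigma>'. (1 - (1/2) ^ card {x\<in>Cl s. \<sigma> x}) ^ card {x\<in>Cw s. \<sigma>' x}) \<le> B"
      unfolding B_def
      by (rule G[OF finA CwA[OF s] ClA[OF s] p0 p1 pW pL alpha(1) r1 kpos lpos mu_range nu'])
    show ?thesis using Gs False
      unfolding I2_def I1_def E3_I2[OF finA CwA[OF s] ClA[OF s]] E3_I1[OF finA CwA[OF s] ClA[OF s]]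
      by simp
  qed
  have "E3 p A errf \<le> E3 p A (\<lambda>\<omega>. \<Sum>s\<in>S. P s * ((I2 s \<omega> + I1 s \<omega>) / 2))"
    by (rule E3_mono[OF p0 p1 step1])
  also have "\<dots> = (\<Sum>s\<in>S. P s * ((E3 p A (I2 s) + E3 p A (I1 s)) / 2))" by (rule E3_lin)
  also have "\<dots> \<le> (\<Sum>s\<in>S. P s * B + (if isbad s then P s else 0))"
  proof (rule sum_mono)
    fix s assume s: "s \<in> S"
    have "P s * ((E3 p A (I2 s) + E3 p A (I1 s)) / 2) \<le> P s * (if isbad s then 1 else B)"
      using cb[OF s] by (intro mult_left_mono Pnn[OF s]) auto
    also have "\<dots> \<le> P s * B + (if isbad s then P s else 0)"
      using Pnn[OF s] B0 by auto
    finally show "P s * ((E3 p A (I2 s) + E3 p A (I1 s)) / 2) \<le> P s * B + (if isbad s then P s else 0)" .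
  qed
  also have "\<dots> = B + (\<Sum>s\<in>{s\<in>S. card (Cw s) < m \<or> card (Cl s) > n}. P s)"
    by (simp add: sum.distrib sum_distrib_right[symmetric] Psum sum.inter_filter[OF finS] isbad_def)
  also have "\<dots> \<le> B + \<epsilon>" using bad by simp
  finally have E: "E3 p A errf \<le> B + \<epsilon>" .
  have fin3: "finite (Om3 A)" unfolding Om3_def using finite_Om[OF finA] finite_OD[OF finA] by simp
  have w1: "sum (w3 p A) (Om3 A) = 1" using E3_one[OF finA, of p] unfolding E3_def by simp
  obtain \<omega> where "\<omega> \<in> Om3 A" "errf \<omega> \<le> B + \<epsilon>"
    using ex_le[OF fin3 w3_nonneg[OF p0 p1] w1 E[unfolded E3_def]] by blast
  then obtain \<sigma>1 \<sigma>2 D where "policy_error S P Cw Cl (pol \<sigma>1 \<sigma>2 D) \<le> B + \<epsilon>"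
    unfolding errf_def by (auto split: prod.splits)
  then show ?thesis
    unfolding Let_def B_def B0_def r_def[symmetric] using pol_policy by blast
qed


end
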